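(* If $f:[a,b]\to\mathbb F$ is $g$-continuous at $t\in[a,b]$, then the function $f^*:[a,b]\to\mathbb F$, $f^*(s)=f(s^* )$, is also $g$-continuous at $t$.
   Context: Let $g:\mathbb R\to\mathbb R$ be nondecreasing and left-continuous, $\mathbb F\in\{\mathbb R,\mathbb C\}$. $\Delta g(t)=g(t^+)-g(t)$, $D_g=\{t:\Delta g(t)>0\}$, $C_g=\{t: g\text{ constant on }(t-\varepsilon,t+\varepsilon)\text{ for some }\varepsilon>0\}=\bigcup_{n\in\Lambda}(a_n,b_n)$ (disjoint union of connected components), $N_g^-=\{a_n\}\setminus D_g$, $N_g^+=\{b_n\}\setminus D_g$. Fix $a<b$ with $a\notin N_g^-\cup D_g$, $b\notin D_g\cup C_g\cup N_g^+$. For $s\in[a,b]$, $s^*=s$ if $s\notin C_g$ and $s^*=b_n$ if $s\in(a_n,b_n)$. A function $u:D\subset\mathbb R\to\mathbb F$ is $g$-continuous at $t\in D$ if for every $\varepsilon>0$ there is $\delta>0$ with $|u(t)-u(s)|<\varepsilon$ for all $s\in D$ with $|g(t)-g(s)|<\delta$. *)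

theory Defs
  imports "HOL-Analysis.Analysis"
begin

definition jump :: "(real \<Rightarrow> real) \<Rightarrow> real \<Rightarrow> real" where
  "jump g t = Lim (at_right t) g - g t"

definition Dg :: "(real \<Rightarrow> real) \<Rightarrow> real set" where
  "Dg g = {t. jump g t > 0}"

definition Cg :: "(real \<Rightarrow> real) \<Rightarrow> real set" where
  "Cg g = {t. \<exists>e>0. \<forall>s. \<bar>s - t\<bar> < e \<longrightarrow> g s = g t}"

definition left_ends :: "(real \<Rightarrow> real) \<Rightarrow> real set" where
  "left_ends g = {Inf K | K. K \<in> components (Cg g) \<and> bdd_below K}"

definition right_ends :: "(real \<Rightarrow> real) \<Rightarrow> real set" where
  "right_ends g = {Sup K | K. K \<in> components (Cg g) \<and> bdd_above K}"

definition Ng_minus :: "(real \<Rightarrow> real) \<Rightarrow> real set" where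
  "Ng_minus g = left_ends g - Dg g"

definition Ng_plus :: "(real \<Rightarrow> real) \<Rightarrow> real set" where
  "Ng_plus g = right_ends g - Dg g"

definition gstar :: "(real \<Rightarrow> real) \<Rightarrow> real \<Rightarrow> real" where
  "gstar g s = (if s \<in> Cg g then Sup (connected_component_set (Cg g) s) else s)"

definition g_continuous_at :: "(real \<Rightarrow> real) \<Rightarrow> real set \<Rightarrow> (real \<Rightarrow> 'a::real_normed_vector) \<Rightarrow> real \<Rightarrow> bool" where
  "g_continuous_at g D u t \<longleftrightarrow> t \<in> D \<and>
     (\<forall>e>0. \<exists>d>0. \<forall>s\<in>D. \<bar>g t - g s\<bar> < d \<longrightarrow> norm (u t - u s) < e)"

end

theory Submission
  imports Defs
begin

lemma open_Cg: "open (Cg g)"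
  unfolding open_dist
proof (intro ballI)
  fix t assume "t \<in> Cg g"
  then obtain e where e: "(e::real) > 0" and h: "\<forall>s. \<bar>s - t\<bar> < e \<longrightarrow> g s = g t"
    unfolding Cg_def by blast
  show "\<exists>d>0. \<forall>y. dist y t < d \<longrightarrow> y \<in> Cg g"
  proof (intro exI[of _ e] conjI allI impI)
    fix y assume y: "dist y t < e"
    have "\<exists>e'>0. \<forall>s. \<bar>s - y\<bar> < e' \<longrightarrow> g s = g y"
    proof (intro exI[of _ "e - dist y t"] conjI allI impI)
      show "e - dist y t > 0" using y by simp
      fix s assume "\<bar>s - y\<bar> < e - dist y t"
      then have "\<bar>s - t\<bar> < e" "\<bar>y - t\<bar> < e" using y by (auto simp: dist_real_def)
      then show "g s = g y" using h[rule_format, of s] h[rule_format, of y] by argo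
    qed
    then show "y \<in> Cg g" unfolding Cg_def by blast
  qed (rule e)
qed

lemma gstar_props:
  fixes g :: "real \<Rightarrow> real"
  assumes mono: "mono g" and lc: "\<And>x. continuous (at_left x) g"
    and bC: "b \<notin> Cg g" and s: "s \<in> {a..b}"
  shows "gstar g s \<in> {a..b} \<and> g (gstar g s) = g s"
proof (cases "s \<in> Cg g")
  case False
  then show ?thesis using s by (simp add: gstar_def)
next
  case True
  define K where "K = connected_component_set (Cg g) s"
  have sK: "s \<in> K" using True by (simp add: K_def)
  have cK: "connected K" by (simp add: K_def)
  have KC: "K \<subseteq> Cg g" by (simp add: K_def connected_component_subset)
  have oK: "open K" unfolding K_def by (rule open_connected_component[OF open_Cg])
  have iK: "is_interval K" using cK is_interval_connected_1 by blast
  have const: "\<And>x. x \<in> K \<Longrightarrow> g x = g s"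
  proof -
    fix x assume x: "x \<in> K"
    have "g s = g x"
    proof (rule connected_local_const[OF cK sK x], intro ballI)
      fix y assume "y \<in> K"
      then have "y \<in> Cg g" using KC by auto
      then obtain e where e: "e > 0" "\<forall>z. \<bar>z - y\<bar> < e \<longrightarrow> g z = g y"
        unfolding Cg_def by auto
      show "\<forall>\<^sub>F z in at y within K. g y = g z"
        unfolding eventually_at
      proof (intro exI[of _ e] conjI ballI impI)
        fix x assume "x \<in> K" "x \<noteq> y \<and> dist x y < e"
        then show "g y = g x" using e(2)[rule_format, of x] by (simp add: dist_real_def)
      qed (rule e(1))
    qed
    then show "g x = g s" by simp
  qed
  have Kb: "\<And>x. x \<in> K \<Longrightarrow> x < b"
  proof (rule ccontr)
    fix x assume x: "x \<in> K" "\<not> x < b"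
    have "s \<le> b" "b \<le> x" using s x by auto
    then have "b \<in> K" using iK sK x(1) unfolding is_interval_1 by blast
    then show False using KC bC by auto
  qed
  have bdd: "bdd_above K" using Kb by (meson bdd_aboveI less_imp_le)
  define c where "c = Sup K"
  have gs: "gstar g s = c" using True by (simp add: gstar_def c_def K_def)
  have sc: "s \<le> c" unfolding c_def using sK bdd by (rule cSup_upper)
  have cb: "c \<le> b" unfolding c_def by (rule cSup_least) (use sK Kb less_imp_le in auto)
  obtain e where e: "e > 0" "ball s e \<subseteq> K" using oK sK open_contains_ball by blast
  have "s + e/2 \<in> K" apply (rule subsetD[OF e(2)]) using e(1) by (simp add: dist_real_def)
  then have s_lt: "s < c" unfolding c_def
    using cSup_upper[of "s + e/2" K, OF _ bdd] e(1) by linarith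
  have ev: "\<forall>\<^sub>F x in at_left c. g x = g s"
    unfolding eventually_at_left_field
  proof (intro exI[of _ s] conjI allI impI)
    show "s < c" by (rule s_lt)
    fix x assume x0: "s < x" "x < c"
    then have x: "s < x \<and> x < c" by simp
    then obtain y where y: "y \<in> K" "x < y"
      using less_cSup_iff[of K x] sK bdd unfolding c_def by auto
    have "s \<le> x" "x \<le> y" using x0 y by auto
    then have "x \<in> K" using iK sK y(1) unfolding is_interval_1 by blast
    then show "g x = g s" by (rule const)
  qed
  have l1: "(g \<longlongrightarrow> g c) (at_left c)" using lc[of c] by (simp add: continuous_within)
  have l2: "(g \<longlongrightarrow> g s) (at_left c)" using ev by (simp add: tendsto_eventually)
  have "g c = g s" using tendsto_unique[OF trivial_limit_at_left_real l1 l2] .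
  then show ?thesis using gs sc cb s by auto
qed

theorem proposition5p1:
  fixes g :: "real \<Rightarrow> real" and f :: "real \<Rightarrow> 'a::real_normed_vector"
    and a b t :: real
  assumes "mono g"
    and "\<And>x. continuous (at_left x) g"
    and "a < b"
    and "a \<notin> Ng_minus g \<union> Dg g"
    and "b \<notin> Dg g \<union> Cg g \<union> Ng_plus g"
    and "t \<in> {a..b}"
    and "g_continuous_at g {a..b} f t"
  shows "g_continuous_at g {a..b} (\<lambda>s. f (gstar g s)) t"
proof -
  have bC: "b \<notin> Cg g" using assms(5) by auto
  note P = gstar_props[OF assms(1,2) bC]
  have fc: "\<And>e. e > 0 \<Longrightarrow> \<exists>d>0. \<forall>s\<in>{a..b}. \<bar>g t - g s\<bar> < d \<longrightarrow> norm (f t - f s) < e"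
    using assms(7) unfolding g_continuous_at_def by auto
  have ft: "f (gstar g t) = f t"
  proof (rule ccontr)
    assume ne: "f (gstar g t) \<noteq> f t"
    obtain d where d: "d > 0" "\<forall>s\<in>{a..b}. \<bar>g t - g s\<bar> < d \<longrightarrow> norm (f t - f s) < norm (f t - f (gstar g t))"
      using fc[of "norm (f t - f (gstar g t))"] ne by auto
    then show False using P[OF assms(6)] d(2)[rule_format, of "gstar g t"] by auto
  qed
  show ?thesis unfolding g_continuous_at_def
  proof (intro conjI allI impI)
    show "t \<in> {a..b}" by (rule assms(6))
    fix e :: real assume "e > 0"
    then obtain d where d: "d > 0" "\<forall>s\<in>{a..b}. \<bar>g t - g s\<bar> < d \<longrightarrow> norm (f t - f s) < e"
      using fc by blast
    show "\<exists>d>0. \<forall>s\<in>{a..b}. \<bar>g t - g s\<bar> < d \<longrightarrow> norm (f (gstar g t) - f (gstar g s)) < e"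
    proof (intro exI[of _ d] conjI ballI impI)
      fix s assume s: "s \<in> {a..b}" "\<bar>g t - g s\<bar> < d"
      have Ps: "gstar g s \<in> {a..b}" "g (gstar g s) = g s" using P[OF s(1)] by auto
      have "\<bar>g t - g (gstar g s)\<bar> < d" using Ps(2) s(2) by simp
      then have "norm (f t - f (gstar g s)) < e" using d(2) Ps(1) by blast
      then show "norm (f (gstar g t) - f (gstar g s)) < e" using ft by simp
    qed (rule d(1))
  qed
qed

end
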